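(* Let $p_s\in(0,1)$, $p_f=1-p_s$, and let $p_{-1},p_0,p_1\in[0,1]$ with $p_{-1}+p_0+p_1=1$. Let $(h(t))$ be i.i.d. with $\mathbb{P}[h(t)=1]=p_s$, $\mathbb{P}[h(t)=0]=p_f$, and let $(\delta(t))$ be i.i.d., independent of $(h(t))$, with $\mathbb{P}[\delta(t)=k]=p_k$ for $k\in\{-1,0,1\}$. Define the positive-integer-valued process $$\Delta(t)=\begin{cases}\max\{1,\delta(t)+1\}, & h(t)=1,\\ \max\{1,\ \Delta(t-1)+\delta(t)-\delta(t-1)+1\}, & h(t)=0.\end{cases}$$ Let $F=1-p_s(1-p_{-1})$. Then the stationary distribution $\pi_{k,i}=\lim_{t\to\infty}\mathbb{P}[\delta(t)=k,\Delta(t)=i]$, $k\in\{-1,0,1\}$, $i\ge1$, of the Markov chain $(\delta(t),\Delta(t))$ is $$\pi_{k,i}=\begin{cases} p_{-1}p_s\big(1+p_f(1-p_{-1})\big), & k=-1,\ i=1,\\ p_{-1}p_sp_f^{\,i-1}F, & k=-1,\ i\ge2,\\ p_kp_s, & k\in\{0,1\},\ i=k+1,\\ p_kp_sp_f(1-p_{-1}), & k\in\{0,1\},\ i=k+2,\\ p_kp_sp_f^{\,i-2-k}F, & k\in\{0,1\},\ i\ge k+3,\end{cases}$$ and $\pi_{k,i}=0$ for $k\in\{0,1\}$, $1\le i\le k$.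
   Context: Model: $h(t)=1$ means successful decoding at the receiver in slot $t$; $\delta(t)\in\{-1,0,1\}$ is the random clock drift (in slots) of the receiver's clock relative to the transmitter's clock in slot $t$; $\Delta(t)$ is the age of information at the receiver. *)

theory Defs
  imports "HOL-Probability.Probability"
begin

fun aoi :: "(nat \<Rightarrow> 'a \<Rightarrow> int) \<Rightarrow> (nat \<Rightarrow> 'a \<Rightarrow> int) \<Rightarrow> ('a \<Rightarrow> int) \<Rightarrow> nat \<Rightarrow> 'a \<Rightarrow> int" where
  "aoi h d D0 0 \<omega> = D0 \<omega>"
| "aoi h d D0 (Suc t) \<omega> =
     (if h (Suc t) \<omega> = 1 then max 1 (d (Suc t) \<omega> + 1)
      else max 1 (aoi h d D0 t \<omega> + d (Suc t) \<omega> - d t \<omega> + 1))"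

definition stat_pi :: "real \<Rightarrow> real \<Rightarrow> real \<Rightarrow> real \<Rightarrow> int \<Rightarrow> int \<Rightarrow> real" where
  "stat_pi ps pm1 p0 p1 k i =
     (let pf = 1 - ps; F = 1 - ps * (1 - pm1); pk = (if k = 0 then p0 else p1) in
      if k = -1 then
        (if i = 1 then pm1 * ps * (1 + pf * (1 - pm1))
         else pm1 * ps * pf ^ nat (i - 1) * F)
      else if i \<le> k then 0
      else if i = k + 1 then pk * ps
      else if i = k + 2 then pk * ps * pf * (1 - pm1)
      else pk * ps * pf ^ nat (i - 2 - k) * F)"

end

theory Submission
  imports Defs
begin

lemma aoi_last:
  assumes "1 \<le> s" "s \<le> t" "h s \<omega> = 1" "\<forall>j\<in>{s<..t}. h j \<omega> \<noteq> 1" "\<forall>j. d j \<omega> \<in> {-1,0,1}"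
  shows "aoi h d D0 t \<omega> = d t \<omega> + int (t-s) + 1 + (if d s \<omega> = -1 then 1 else 0)"
  using assms
proof (induction t)
  case 0 then show ?case by simp
next
  case (Suc t)
  show ?case
  proof (cases "s = Suc t")
    case True
    have "d s \<omega> \<in> {-1,0,1}" using Suc.prems by auto
    then show ?thesis using True Suc.prems by auto
  next
    case False
    then have st: "s \<le> t" using Suc.prems by auto
    have IH: "aoi h d D0 t \<omega> = d t \<omega> + int (t-s) + 1 + (if d s \<omega> = -1 then 1 else 0)"
      using Suc.IH st Suc.prems by auto
    have "h (Suc t) \<omega> \<noteq> 1" using Suc.prems st by auto
    moreover have "d (Suc t) \<omega> \<in> {-1,0,1}" using Suc.prems by auto
    ultimately show ?thesis using IH st by (auto simp: Suc_diff_le)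
  qed
qed

lemma sum_delta_int:
  "(\<Sum>m<N. if 1 \<le> m \<and> int m = a then f m else 0) = (if 1 \<le> a \<and> a < int N then f (nat a) else (0::real))"
proof -
  have "(\<Sum>m<N. if 1 \<le> m \<and> int m = a then f m else 0) = (\<Sum>m<N. if m = nat a \<and> 1 \<le> a then f m else 0)"
    by (intro sum.cong) auto
  also have "\<dots> = (if 1 \<le> a \<and> a < int N then f (nat a) else 0)"
    by (cases "1 \<le> a") (auto simp: sum.delta' )
  finally show ?thesis .
qed

lemma stat_sum:
  fixes k i :: int and N :: nat
  assumes k: "k \<in> {-1,0,1}" and i: "i \<ge> 1" and N: "int N \<ge> i + 2"
  shows "(\<Sum>m<N. ps * (1-ps)^m * (if k = -1 then pm1 else if k = 0 then p0 else p1) *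
      (if m = 0 then (if k + 1 + (if k = -1 then 1 else 0) = i then 1 else 0)
       else if k + int m + 2 = i then pm1 else if k + int m + 1 = i then 1 - pm1 else 0))
    = stat_pi ps pm1 p0 p1 k i"
proof -
  define pk where "pk = (if k = -1 then pm1 else if k = 0 then p0 else p1)"
  define pf where "pf = 1 - ps"
  define c0 where "c0 = (if k + 1 + (if k = -1 then 1 else 0) = i then 1 else (0::real))"
  have "(\<Sum>m<N. ps * (1-ps)^m * (if k = -1 then pm1 else if k = 0 then p0 else p1) *
      (if m = 0 then (if k + 1 + (if k = -1 then 1 else 0) = i then 1 else 0)
       else if k + int m + 2 = i then pm1 else if k + int m + 1 = i then 1 - pm1 else 0))
   = (\<Sum>m<N. (if m = 0 then ps * pk * c0 else 0) 
       + (if 1 \<le> m \<and> int m = i - k - 2 then ps * pf^m * pk * pm1 else 0)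
       + (if 1 \<le> m \<and> int m = i - k - 1 then ps * pf^m * pk * (1 - pm1) else 0))"
    by (intro sum.cong) (auto simp: pk_def pf_def c0_def)
  also have "\<dots> = (if 0 < N then ps * pk * c0 else 0)
     + (if 1 \<le> i - k - 2 \<and> i - k - 2 < int N then ps * pf^(nat (i-k-2)) * pk * pm1 else 0)
     + (if 1 \<le> i - k - 1 \<and> i - k - 1 < int N then ps * pf^(nat (i-k-1)) * pk * (1 - pm1) else 0)"
    unfolding sum.distrib sum_delta_int by (simp add: sum.delta')
  also have "\<dots> = stat_pi ps pm1 p0 p1 k i"
  proof -
    have N0: "0 < N" using N i by linarith
    have lt: "i - k - 1 < int N" "i - k - 2 < int N" using N k by auto
    show ?thesis
    proof (cases "k = -1")
      case True
      then show ?thesis 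
      proof (cases "i = 1")
        case True
        then show ?thesis using \<open>k = -1\<close> N0 lt by (simp add: stat_pi_def pk_def c0_def pf_def algebra_simps)
      next
        case False
        then have i2: "i \<ge> 2" using i by auto
        have e: "nat i = Suc (nat (i - 1))" using i2 by auto
        show ?thesis using \<open>k = -1\<close> N0 lt i2 e
          by (simp add: stat_pi_def pk_def c0_def pf_def Let_def algebra_simps)
      qed
    next
      case False
      then have k01: "k = 0 \<or> k = 1" using k by auto
      consider "i \<le> k" | "i = k + 1" | "i = k + 2" | "i \<ge> k + 3" by linarith
      then show ?thesis
      proof cases
        case 1 then show ?thesis using k01 i N0 by (auto simp: stat_pi_def pk_def c0_def pf_def)
      next
        case 2 then show ?thesis using k01 i N0 by (auto simp: stat_pi_def pk_def c0_def pf_def)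
      next
        case 3 then show ?thesis using k01 i N0 lt by (auto simp: stat_pi_def pk_def c0_def pf_def)
      next
        case 4
        have e: "nat (i - k - 1) = Suc (nat (i - 2 - k))" using 4 by auto
        show ?thesis using k01 i N0 lt 4 e
          by (auto simp: stat_pi_def pk_def c0_def pf_def Let_def algebra_simps)
      qed
    qed
  qed
  finally show ?thesis .
qed

lemma aoi_meas:
  assumes "\<And>t. h t \<in> measurable M (count_space UNIV)" "\<And>t. d t \<in> measurable M (count_space UNIV)"
    "D0 \<in> measurable M (count_space UNIV)"
  shows "aoi h d D0 t \<in> measurable M (count_space UNIV)"
proof (induction t)
  case 0 then show ?case using assms by simp
next
  case (Suc t)
  note [measurable] = Suc assms
  show ?case by simp measurable
qed

theorem lemma3:
  fixes M :: "'a measure" and h \<delta> :: "nat \<Rightarrow> 'a \<Rightarrow> int" and D0 :: "'a \<Rightarrow> int"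
    and ps pm1 p0 p1 :: real
  assumes "prob_space M"
    and "0 < ps" "ps < 1"
    and "0 \<le> pm1" "pm1 \<le> 1" "0 \<le> p0" "p0 \<le> 1" "0 \<le> p1" "p1 \<le> 1"
    and "pm1 + p0 + p1 = 1"
    and "prob_space.indep_vars M (\<lambda>_. count_space UNIV)
           (\<lambda>j. case j of Inl t \<Rightarrow> h t | Inr t \<Rightarrow> \<delta> t) (UNIV :: (nat + nat) set)"
    and "\<And>t. measure M {\<omega> \<in> space M. h t \<omega> = 1} = ps"
    and "\<And>t. measure M {\<omega> \<in> space M. h t \<omega> = 0} = 1 - ps"
    and "\<And>t. measure M {\<omega> \<in> space M. \<delta> t \<omega> = -1} = pm1"
    and "\<And>t. measure M {\<omega> \<in> space M. \<delta> t \<omega> = 0} = p0"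
    and "\<And>t. measure M {\<omega> \<in> space M. \<delta> t \<omega> = 1} = p1"
    and "D0 \<in> measurable M (count_space UNIV)"
    and "\<And>\<omega>. \<omega> \<in> space M \<Longrightarrow> D0 \<omega> \<ge> 1"
    and "k \<in> {-1, 0, 1}" and "i \<ge> 1"
  shows "(\<lambda>t. measure M {\<omega> \<in> space M. \<delta> t \<omega> = k \<and> aoi h \<delta> D0 t \<omega> = i})
           \<longlonglongrightarrow> stat_pi ps pm1 p0 p1 k i"
proof -
  interpret P: prob_space M by fact
  define X where "X = (\<lambda>j. case j of Inl t \<Rightarrow> h t | Inr t \<Rightarrow> \<delta> t)"
  have ind: "P.indep_vars (\<lambda>_. count_space UNIV) X UNIV" using assms(11) unfolding X_def .
  have rvX: "X j \<in> measurable M (count_space UNIV)" for j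
    using ind unfolding P.indep_vars_def2 by auto
  have mh[measurable]: "h t \<in> measurable M (count_space UNIV)" for t
    using rvX[of "Inl t"] by (simp add: X_def)
  have md[measurable]: "\<delta> t \<in> measurable M (count_space UNIV)" for t
    using rvX[of "Inr t"] by (simp add: X_def)
  have ma[measurable]: "aoi h \<delta> D0 t \<in> measurable M (count_space UNIV)" for t
    by (rule aoi_meas) (use mh md assms(17) in auto)
  have prodlem: "measure M {\<omega>\<in>space M. \<forall>j\<in>J. X j \<omega> \<in> A j} = (\<Prod>j\<in>J. measure M {\<omega>\<in>space M. X j \<omega> \<in> A j})"
    if "finite J" "J \<noteq> {}" for J A
  proof -
    have "measure M (\<Inter>j\<in>J. X j -` A j \<inter> space M) = (\<Prod>j\<in>J. measure M (X j -` A j \<inter> space M))"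
      by (rule P.indep_varsD[OF ind]) (use that in auto)
    moreover have "(\<Inter>j\<in>J. X j -` A j \<inter> space M) = {\<omega>\<in>space M. \<forall>j\<in>J. X j \<omega> \<in> A j}" using that by auto
    moreover have "X j -` A j \<inter> space M = {\<omega>\<in>space M. X j \<omega> \<in> A j}" for j by auto
    ultimately show ?thesis by simp
  qed
  have hne: "measure M {\<omega>\<in>space M. h j \<omega> \<noteq> 1} = 1 - ps" for j
  proof -
    have "{\<omega>\<in>space M. h j \<omega> \<noteq> 1} = space M - {\<omega>\<in>space M. h j \<omega> = 1}" by auto
    then show ?thesis using P.prob_compl[of "{\<omega>\<in>space M. h j \<omega> = 1}"] assms(12) by simp
  qed
  have dne: "measure M {\<omega>\<in>space M. \<delta> j \<omega> \<noteq> -1} = 1 - pm1" for j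
  proof -
    have "{\<omega>\<in>space M. \<delta> j \<omega> \<noteq> -1} = space M - {\<omega>\<in>space M. \<delta> j \<omega> = -1}" by auto
    then show ?thesis using P.prob_compl[of "{\<omega>\<in>space M. \<delta> j \<omega> = -1}"] assms(14) by simp
  qed
  have good: "AE \<omega> in M. \<forall>j. \<delta> j \<omega> \<in> {-1,0,1}"
  proof (subst AE_all_countable, intro allI)
    fix j
    have e: "{\<omega>\<in>space M. \<delta> j \<omega> \<in> {-1,0,1}} = {\<omega>\<in>space M. \<delta> j \<omega> = -1} \<union>
       ({\<omega>\<in>space M. \<delta> j \<omega> = 0} \<union> {\<omega>\<in>space M. \<delta> j \<omega> = 1})" by auto
    have "measure M {\<omega>\<in>space M. \<delta> j \<omega> \<in> {-1,0,1}} = pm1 + (p0 + p1)"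
      unfolding e using assms(14-16)
      by (subst P.finite_measure_Union, measurable, force)+ simp
    then have "measure M {\<omega>\<in>space M. \<delta> j \<omega> \<in> {-1,0,1}} = 1" using assms(10) by simp
    moreover have "{\<omega>\<in>space M. \<delta> j \<omega> \<in> {-1,0,1}} \<in> sets M"
    proof -
      have "\<delta> j -` {-1,0,1} \<inter> space M \<in> sets M" by (rule measurable_sets[OF md]) simp
      moreover have "\<delta> j -` {-1,0,1} \<inter> space M = {\<omega>\<in>space M. \<delta> j \<omega> \<in> {-1,0,1}}" by auto
      ultimately show ?thesis by simp
    qed
    ultimately show "AE \<omega> in M. \<delta> j \<omega> \<in> {-1,0,1}"
      using P.prob_Collect_eq_1[of "\<lambda>\<omega>. \<delta> j \<omega> \<in> {-1,0,1}"] by simp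
  qed
  define pf where "pf = 1 - ps"
  define pk where "pk = (if k = -1 then pm1 else if k = 0 then p0 else p1)"
  define c where "c = (\<lambda>m::nat. if m = 0 then (if k + 1 + (if k = -1 then 1 else 0) = i then 1 else 0)
       else if k + int m + 2 = i then pm1 else if k + int m + 1 = i then 1 - pm1 else (0::real))"
  define E where "E = (\<lambda>t. {\<omega> \<in> space M. \<delta> t \<omega> = k \<and> aoi h \<delta> D0 t \<omega> = i})"
  define S where "S = (\<lambda>t. {\<omega> \<in> space M. \<exists>j\<in>{1..t}. h j \<omega> = 1})"
  define Q where "Q = (\<lambda>t s. {\<omega>\<in>space M. h s \<omega> = 1 \<and> (\<forall>j\<in>{s<..t}. h j \<omega> \<noteq> 1) \<and> \<delta> t \<omega> = k \<and>
          k + int (t-s) + 1 + (if \<delta> s \<omega> = -1 then 1 else 0) = i})"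
  have Em[measurable]: "E t \<in> sets M" for t unfolding E_def by measurable
  have Sm[measurable]: "S t \<in> sets M" for t unfolding S_def by measurable
  have Qm[measurable]: "Q t s \<in> sets M" for t s unfolding Q_def by measurable
  have dk: "measure M {\<omega>\<in>space M. \<delta> t \<omega> = k} = pk" for t
    using assms(14-16,19) by (auto simp: pk_def)
  have QA: "measure M (Q t s) = ps * pf^(t-s) * pk * c (t-s)" if "s \<le> t" for t s
  proof (cases "s = t")
    case True
    define A where "A = (\<lambda>j::nat+nat. case j of Inl _ \<Rightarrow> {1::int} | Inr _ \<Rightarrow> {d. d = k \<and> k + 1 + (if d = -1 then 1 else 0) = i})"
    have "Q t s = {\<omega>\<in>space M. \<forall>j\<in>{Inl t, Inr t}. X j \<omega> \<in> A j}"
      unfolding Q_def X_def A_def True by auto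
    then have "measure M (Q t s) = (\<Prod>j\<in>{Inl t, Inr t}. measure M {\<omega>\<in>space M. X j \<omega> \<in> A j})"
      using prodlem[of "{Inl t, Inr t}" A] by simp
    also have "\<dots> = measure M {\<omega>\<in>space M. h t \<omega> = 1} * measure M {\<omega>\<in>space M. \<delta> t \<omega> = k \<and> k + 1 + (if \<delta> t \<omega> = -1 then 1 else 0) = i}"
      by (simp add: A_def X_def)
    also have "\<dots> = ps * pf^(t-s) * pk * c (t-s)"
    proof (cases "k + 1 + (if k = -1 then 1 else 0) = i")
      case True
      then have "{\<omega>\<in>space M. \<delta> t \<omega> = k \<and> k + 1 + (if \<delta> t \<omega> = -1 then 1 else 0) = i} = {\<omega>\<in>space M. \<delta> t \<omega> = k}"
        by auto
      then show ?thesis using True \<open>s = t\<close> by (simp add: dk assms(12) c_def)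
    next
      case False
      then have e: "{\<omega>\<in>space M. \<delta> t \<omega> = k \<and> k + 1 + (if \<delta> t \<omega> = -1 then 1 else 0) = i} = {}"
        by auto
      show ?thesis unfolding e using False \<open>s = t\<close> by (simp add: c_def)
    qed
    finally show ?thesis .
  next
    case False
    then have st: "s < t" using that by auto
    define A where "A = (\<lambda>j::nat+nat. case j of Inl j \<Rightarrow> if j = s then {1::int} else -{1}
        | Inr j \<Rightarrow> if j = t then {k} else {d. k + int (t-s) + 1 + (if d = -1 then 1 else 0) = i})"
    define J where "J = Inl ` {s..t} \<union> {Inr s, Inr t}"
    have fJ: "finite J" "J \<noteq> {}" unfolding J_def by auto
    have "Q t s = {\<omega>\<in>space M. \<forall>j\<in>J. X j \<omega> \<in> A j}"
      unfolding Q_def X_def A_def J_def using st by (auto simp: less_imp_le)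
    then have "measure M (Q t s) = (\<Prod>j\<in>J. measure M {\<omega>\<in>space M. X j \<omega> \<in> A j})"
      using fJ by (simp add: prodlem)
    also have "\<dots> = (\<Prod>j\<in>Inl ` {s..t}. measure M {\<omega>\<in>space M. X j \<omega> \<in> A j}) *
        (\<Prod>j\<in>{Inr s, Inr t}. measure M {\<omega>\<in>space M. X j \<omega> \<in> A j})"
      unfolding J_def by (rule prod.union_disjoint) auto
    also have "(\<Prod>j\<in>Inl ` {s..t}. measure M {\<omega>\<in>space M. X j \<omega> \<in> A j}) = 
        (\<Prod>j\<in>{s..t}. measure M {\<omega>\<in>space M. h j \<omega> \<in> (if j = s then {1} else -{1})})"
      by (subst prod.reindex) (auto simp: X_def A_def)
    also have "\<dots> = (\<Prod>j\<in>insert s {s<..t}. measure M {\<omega>\<in>space M. h j \<omega> \<in> (if j = s then {1} else -{1})})"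
      using st by (intro prod.cong) auto
    also have "\<dots> = ps * pf^(t-s)"
      using assms(12) hne by (simp add: pf_def)
    also have "(\<Prod>j\<in>{Inr s, Inr t}. measure M {\<omega>\<in>space M. X j \<omega> \<in> A j}) =
        measure M {\<omega>\<in>space M. k + int (t-s) + 1 + (if \<delta> s \<omega> = -1 then 1 else 0) = i} * pk"
      using st by (simp add: X_def A_def dk)
    also have "measure M {\<omega>\<in>space M. k + int (t-s) + 1 + (if \<delta> s \<omega> = -1 then 1 else 0) = i} = c (t-s)"
    proof -
      consider "k + int (t-s) + 2 = i" | "k + int (t-s) + 1 = i" | "k + int (t-s) + 2 \<noteq> i" "k + int (t-s) + 1 \<noteq> i"
        by blast
      then show ?thesis
      proof cases
        case 1
        then have "{\<omega>\<in>space M. k + int (t-s) + 1 + (if \<delta> s \<omega> = -1 then 1 else 0) = i} = {\<omega>\<in>space M. \<delta> s \<omega> = -1}"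
          by auto
        then show ?thesis using 1 st assms(14) by (simp add: c_def)
      next
        case 2
        then have "{\<omega>\<in>space M. k + int (t-s) + 1 + (if \<delta> s \<omega> = -1 then 1 else 0) = i} = {\<omega>\<in>space M. \<delta> s \<omega> \<noteq> -1}"
          by auto
        then show ?thesis using 2 st dne by (simp add: c_def)
      next
        case 3
        then have "{\<omega>\<in>space M. k + int (t-s) + 1 + (if \<delta> s \<omega> = -1 then 1 else 0) = i} = {}"
          by auto
        then show ?thesis using 3 st by (simp add: c_def)
      qed
    qed
    finally show ?thesis by simp
  qed

  have QB: "measure M (E t) = (\<Sum>s\<in>{1..t}. measure M (Q t s)) + measure M (E t - S t)" for t
  proof -
    have m1: "measure M (E t) = measure M (E t \<inter> S t) + measure M (E t - S t)"
    proof -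
      have u: "E t \<inter> S t \<union> (E t - S t) = E t" by blast
      have d: "E t \<inter> S t \<inter> (E t - S t) = {}" by blast
      show ?thesis using P.finite_measure_Union[of "E t \<inter> S t" "E t - S t"] u d by simp
    qed
    have AEeq: "AE \<omega> in M. \<omega> \<in> E t \<inter> S t \<longleftrightarrow> \<omega> \<in> (\<Union>s\<in>{1..t}. Q t s)"
      using good AE_space
    proof eventually_elim
      case (elim \<omega>)
      show ?case
      proof
        assume a: "\<omega> \<in> E t \<inter> S t"
        define s where "s = Max {j\<in>{1..t}. h j \<omega> = 1}"
        have fin: "finite {j\<in>{1..t}. h j \<omega> = 1}" by simp
        have ne: "{j\<in>{1..t}. h j \<omega> = 1} \<noteq> {}" using a by (auto simp: S_def)
        have sin: "s \<in> {j\<in>{1..t}. h j \<omega> = 1}" unfolding s_def using Max_in[OF fin ne] .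
        have last: "\<forall>j\<in>{s<..t}. h j \<omega> \<noteq> 1"
        proof
          fix j assume j: "j \<in> {s<..t}"
          show "h j \<omega> \<noteq> 1"
          proof
            assume "h j \<omega> = 1"
            then have "j \<le> s" unfolding s_def using Max_ge[OF fin] j by auto
            then show False using j by auto
          qed
        qed
        have "aoi h \<delta> D0 t \<omega> = \<delta> t \<omega> + int (t-s) + 1 + (if \<delta> s \<omega> = -1 then 1 else 0)"
          by (rule aoi_last) (use sin last elim in auto)
        then have "\<omega> \<in> Q t s" using a sin last by (auto simp: Q_def E_def)
        then show "\<omega> \<in> (\<Union>s\<in>{1..t}. Q t s)" using sin by auto
      next
        assume "\<omega> \<in> (\<Union>s\<in>{1..t}. Q t s)"
        then obtain s where s: "s \<in> {1..t}" "\<omega> \<in> Q t s" by auto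
        have "aoi h \<delta> D0 t \<omega> = \<delta> t \<omega> + int (t-s) + 1 + (if \<delta> s \<omega> = -1 then 1 else 0)"
          by (rule aoi_last) (use s elim in \<open>auto simp: Q_def\<close>)
        then show "\<omega> \<in> E t \<inter> S t" using s by (auto simp: Q_def E_def S_def)
      qed
    qed
    have disj: "disjoint_family_on (Q t) {1..t}"
      unfolding disjoint_family_on_def
    proof (intro ballI impI)
      fix m n assume "m \<in> {1..t}" "n \<in> {1..t}" "m \<noteq> n"
      then show "Q t m \<inter> Q t n = {}"
        by (cases "m < n") (force simp: Q_def)+
    qed
    have "measure M (E t \<inter> S t) = measure M (\<Union>s\<in>{1..t}. Q t s)"
      by (rule measure_eq_AE[OF AEeq]) auto
    also have "\<dots> = (\<Sum>s\<in>{1..t}. measure M (Q t s))"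
      by (rule measure_finite_Union) (use disj in auto)
    finally show ?thesis using m1 by simp
  qed

  have QC: "measure M (E t - S t) \<le> pf^t" if "t \<ge> 1" for t
  proof -
    define NS where "NS = {\<omega>\<in>space M. \<forall>j\<in>{1..t}. h j \<omega> \<noteq> 1}"
    have NSm: "NS \<in> sets M" unfolding NS_def by measurable
    have sub: "E t - S t \<subseteq> NS" unfolding NS_def E_def S_def by auto
    have "NS = {\<omega>\<in>space M. \<forall>j\<in>Inl ` {1..t}. X j \<omega> \<in> -{1}}" unfolding NS_def X_def by auto
    then have "measure M NS = (\<Prod>j\<in>Inl`{1..t}. measure M {\<omega>\<in>space M. X j \<omega> \<in> -{1}})"
      using that prodlem[of "Inl ` {1..t}" "\<lambda>_. -{1}"] by simp
    also have "\<dots> = (\<Prod>j\<in>{1..t}. measure M {\<omega>\<in>space M. h j \<omega> \<noteq> 1})"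
      by (subst prod.reindex) (auto simp: X_def)
    also have "\<dots> = pf^t" by (simp add: hne pf_def)
    finally have "measure M NS = pf ^ t" .
    moreover have "measure M (E t - S t) \<le> measure M NS"
      by (rule P.finite_measure_mono[OF sub NSm])
    ultimately show ?thesis by simp
  qed

  have ev: "eventually (\<lambda>t. measure M (E t) = stat_pi ps pm1 p0 p1 k i + measure M (E t - S t)) sequentially"
  proof (rule eventually_sequentiallyI[of "nat i + 2"])
    fix t assume t: "nat i + 2 \<le> t"
    have "(\<Sum>s\<in>{1..t}. measure M (Q t s)) = (\<Sum>s\<in>{1..t}. ps * pf^(t-s) * pk * c (t-s))"
      by (intro sum.cong) (auto simp: QA)
    also have "\<dots> = (\<Sum>m<t. ps * pf^m * pk * c m)"
      by (rule sum.reindex_bij_witness[of _ "\<lambda>m. t - m" "\<lambda>s. t - s"]) auto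
    also have "\<dots> = stat_pi ps pm1 p0 p1 k i"
      using stat_sum[of k i t ps pm1 p0 p1] assms(19,20) t unfolding pf_def pk_def c_def by auto
    finally show "measure M (E t) = stat_pi ps pm1 p0 p1 k i + measure M (E t - S t)"
      using QB by simp
  qed
  have pf0: "(\<lambda>t. pf ^ t) \<longlonglongrightarrow> 0"
    by (rule LIMSEQ_power_zero) (use assms(2,3) in \<open>auto simp: pf_def\<close>)
  have R0: "(\<lambda>t. measure M (E t - S t)) \<longlonglongrightarrow> 0"
  proof (rule tendsto_sandwich[OF _ _ tendsto_const pf0])
    show "\<forall>\<^sub>F t in sequentially. 0 \<le> measure M (E t - S t)" by simp
    show "\<forall>\<^sub>F t in sequentially. measure M (E t - S t) \<le> pf ^ t"
      using QC by (intro eventually_sequentiallyI[of 1]) auto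
  qed
  have "(\<lambda>t. stat_pi ps pm1 p0 p1 k i + measure M (E t - S t)) \<longlonglongrightarrow> stat_pi ps pm1 p0 p1 k i + 0"
    by (intro tendsto_add tendsto_const R0)
  then have "(\<lambda>t. measure M (E t)) \<longlonglongrightarrow> stat_pi ps pm1 p0 p1 k i"
    using ev by (simp add: tendsto_cong)
  then show ?thesis unfolding E_def .
qed
end
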